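(* Let $\mathcal{E}$ be an even Dirichlet form on $L^2(X,m)$ and let $\mathfrak{D}$ be its Dirichlet space. Assume that every $f\in\mathfrak{D}$ is quasi-continuous, and let $C>0$. Then the following are equivalent: (i) every $f\in\mathfrak{D}$ is continuous and bounded (i.e. its quasi-continuous representative is a continuous bounded function on $X$), and $\|f\|_{L^\infty(X,m)}\le C\|f\|_{\mathfrak{D}}$ for all $f\in\mathfrak{D}$; (ii) $\mathrm{Cap}(\{x\})\ge \frac1C$ for every $x\in X$.
   Context: Standing setting: $X$ is a Hausdorff topological space and $m$ is a Borel measure on $X$ with full support, i.e. no nonempty open subset of $X$ has $m$-measure zero. $L^2(X,m)$ is the real $L^2$ space. A Dirichlet form is a functional $\mathcal{E}:L^2(X,m)\to[0,\infty]$ that is convex, lower semicontinuous and densely defined (its effective domain $\mathrm{dom}(\mathcal{E})=\{u:\mathcal{E}(u)<\infty\}$ is dense in $L^2(X,m)$), and such that for all $u,v\in L^2(X,m)$ and $\alpha>0$: (1) $\mathcal{E}(u\wedge v)+\mathcal{E}(u\vee v)\le \mathcal{E}(u)+\mathcal{E}(v)$; (2) $\mathcal{E}\big(v+\tfrac12((u-v+\alpha)_+-(u-v-\alpha)_-)\big)+\mathcal{E}\big(u-\tfrac12((u-v+\alpha)_+-(u-v-\alpha)_-)\big)\le \mathcal{E}(u)+\mathcal{E}(v)$, where $(\cdot)_+$, $(\cdot)_-$ denote positive and negative parts. $\mathcal{E}$ is called even if $\mathcal{E}(0)=0$ and $\mathcal{E}(-u)=\mathcal{E}(u)$ for all $u$.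 Set $\mathcal{E}_1(u)=\|u\|_{L^2(X,m)}^2+\mathcal{E}(u)$. The Dirichlet space is $\mathfrak{D}=\{u\in L^2(X,m):\exists\lambda>0,\ \mathcal{E}_1(\lambda u)<\infty\}$ with the Minkowski norm $\|u\|_{\mathfrak{D}}=\inf\{\lambda>0:\mathcal{E}_1(u/\lambda)\le 1\}$. Capacity: for $A\subseteq X$ let $\mathcal{L}_A=\{u\in L^2(X,m): u\ge 1\ m\text{-a.e. on } U \text{ for some open } U\supseteq A\}$ and define the norm-capacity $\mathrm{Cap}(A)=\inf\{\|u\|_{\mathfrak{D}}: u\in\mathcal{L}_A\}$ (with $\|u\|_{\mathfrak{D}}=\infty$ for $u\notin\mathfrak{D}$, $\inf\emptyset=\infty$). A function $f:X\to\mathbb{R}$ is quasi-continuous if for every $\varepsilon>0$ there is an open set $O\subseteq X$ with $\mathrm{Cap}(O)\le\varepsilon$ such that $f|_{X\setminus O}$ is continuous. An element $f\in L^2(X,m)$ is called quasi-continuous if it has a quasi-continuous representative, and $f$ is then identified with that representative. *)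

theory Defs
  imports "HOL-Probability.Probability"
begin

text \<open>Elements of the real space L2(X,m) are represented by Borel measurable, square-integrable
  functions; functionals on L2 are required to respect equality m-a.e.\<close>

definition L2 :: "'a measure \<Rightarrow> ('a \<Rightarrow> real) set" where
  "L2 M = {u. u \<in> borel_measurable M \<and> integrable M (\<lambda>x. (u x)\<^sup>2)}"

definition L2norm :: "'a measure \<Rightarrow> ('a \<Rightarrow> real) \<Rightarrow> real" where
  "L2norm M u = sqrt (\<integral>x. (u x)\<^sup>2 \<partial>M)"

definition pos_part :: "real \<Rightarrow> real" where "pos_part y = max y 0"
definition neg_part :: "real \<Rightarrow> real" where "neg_part y = max (- y) 0"

definition dirichlet_form :: "'a::topological_space measure \<Rightarrow> (('a \<Rightarrow> real) \<Rightarrow> ennreal) \<Rightarrow> bool" where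
  "dirichlet_form M E \<longleftrightarrow>
     \<comment> \<open>E is a well-defined functional on L2 (respects a.e. equality)\<close>
     (\<forall>u\<in>L2 M. \<forall>v\<in>L2 M. (AE x in M. u x = v x) \<longrightarrow> E u = E v) \<and>
     \<comment> \<open>convex\<close>
     (\<forall>u\<in>L2 M. \<forall>v\<in>L2 M. \<forall>t::real. 0 \<le> t \<and> t \<le> 1 \<longrightarrow>
        E (\<lambda>x. t * u x + (1 - t) * v x) \<le> ennreal t * E u + ennreal (1 - t) * E v) \<and>
     \<comment> \<open>lower semicontinuous w.r.t. the L2 norm\<close>
     (\<forall>u us. u \<in> L2 M \<and> (\<forall>n. us n \<in> L2 M) \<and>
        (\<lambda>n. L2norm M (\<lambda>x. us n x - u x)) \<longlonglongrightarrow> 0 \<longrightarrow> E u \<le> liminf (\<lambda>n. E (us n))) \<and>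
     \<comment> \<open>densely defined\<close>
     (\<forall>u\<in>L2 M. \<forall>\<epsilon>>0. \<exists>v\<in>L2 M. E v < \<infinity> \<and> L2norm M (\<lambda>x. u x - v x) < \<epsilon>) \<and>
     \<comment> \<open>(1)\<close>
     (\<forall>u\<in>L2 M. \<forall>v\<in>L2 M. E (\<lambda>x. min (u x) (v x)) + E (\<lambda>x. max (u x) (v x)) \<le> E u + E v) \<and>
     \<comment> \<open>(2)\<close>
     (\<forall>u\<in>L2 M. \<forall>v\<in>L2 M. \<forall>\<alpha>::real. \<alpha> > 0 \<longrightarrow>
        (let w = (\<lambda>x. (1/2) * (pos_part (u x - v x + \<alpha>) - neg_part (u x - v x - \<alpha>)))
         in E (\<lambda>x. v x + w x) + E (\<lambda>x. u x - w x) \<le> E u + E v))"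

definition even_form :: "'a measure \<Rightarrow> (('a \<Rightarrow> real) \<Rightarrow> ennreal) \<Rightarrow> bool" where
  "even_form M E \<longleftrightarrow> E (\<lambda>x. 0) = 0 \<and> (\<forall>u\<in>L2 M. E (\<lambda>x. - u x) = E u)"

definition E1 :: "'a measure \<Rightarrow> (('a \<Rightarrow> real) \<Rightarrow> ennreal) \<Rightarrow> ('a \<Rightarrow> real) \<Rightarrow> ennreal" where
  "E1 M E u = ennreal ((L2norm M u)\<^sup>2) + E u"

definition dirichlet_space :: "'a measure \<Rightarrow> (('a \<Rightarrow> real) \<Rightarrow> ennreal) \<Rightarrow> ('a \<Rightarrow> real) set" where
  "dirichlet_space M E = {u \<in> L2 M. \<exists>c::real>0. E1 M E (\<lambda>x. c * u x) < \<infinity>}"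

text \<open>Minkowski norm; equals \<infinity> outside the Dirichlet space (Inf of the empty set).\<close>
definition Dnorm :: "'a measure \<Rightarrow> (('a \<Rightarrow> real) \<Rightarrow> ennreal) \<Rightarrow> ('a \<Rightarrow> real) \<Rightarrow> ereal" where
  "Dnorm M E u = Inf {ereal c | c. c > 0 \<and> E1 M E (\<lambda>x. u x / c) \<le> 1}"

definition Cap :: "'a::topological_space measure \<Rightarrow> (('a \<Rightarrow> real) \<Rightarrow> ennreal) \<Rightarrow> 'a set \<Rightarrow> ereal" where
  "Cap M E A = Inf {Dnorm M E u | u. u \<in> L2 M \<and>
      (\<exists>U. open U \<and> A \<subseteq> U \<and> (AE x in M. x \<in> U \<longrightarrow> 1 \<le> u x))}"

definition quasi_continuous :: "'a::topological_space measure \<Rightarrow> (('a \<Rightarrow> real) \<Rightarrow> ennreal) \<Rightarrow> ('a \<Rightarrow> real) \<Rightarrow> bool" where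
  "quasi_continuous M E f \<longleftrightarrow>
     (\<forall>\<epsilon>::real>0. \<exists>V. open V \<and> Cap M E V \<le> ereal \<epsilon> \<and> continuous_on (- V) f)"

definition L2_quasi_continuous :: "'a::topological_space measure \<Rightarrow> (('a \<Rightarrow> real) \<Rightarrow> ennreal) \<Rightarrow> ('a \<Rightarrow> real) \<Rightarrow> bool" where
  "L2_quasi_continuous M E f \<longleftrightarrow> (\<exists>g. quasi_continuous M E g \<and> (AE x in M. f x = g x))"

definition Linfnorm :: "'a measure \<Rightarrow> ('a \<Rightarrow> real) \<Rightarrow> ereal" where
  "Linfnorm M f = esssup M (\<lambda>x. ereal \<bar>f x\<bar>)"

end

theory Submission
  imports Defs
begin

lemma L2_scale: "u \<in> L2 M \<Longrightarrow> (\<lambda>x. a * u x) \<in> L2 M"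
proof -
  assume u: "u \<in> L2 M"
  have "(\<lambda>x. (a * u x)\<^sup>2) = (\<lambda>x. a\<^sup>2 * (u x)\<^sup>2)" by (simp add: power_mult_distrib)
  then show ?thesis using u unfolding L2_def by auto
qed

lemma L2_div: "u \<in> L2 M \<Longrightarrow> (\<lambda>x. u x / a) \<in> L2 M"
  using L2_scale[of u M "1/a"] by simp

lemma L2norm_scale: "L2norm M (\<lambda>x. a * u x) = \<bar>a\<bar> * L2norm M u"
proof -
  have "(\<lambda>x. (a * u x)\<^sup>2) = (\<lambda>x. a\<^sup>2 * (u x)\<^sup>2)" by (simp add: power_mult_distrib)
  then show ?thesis unfolding L2norm_def by (simp add: real_sqrt_mult)
qed

lemma L2norm_neg: "L2norm M (\<lambda>x. - u x) = L2norm M u"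
  unfolding L2norm_def by simp

lemma Dnorm_nonneg: "Dnorm M E u \<ge> 0"
  unfolding Dnorm_def by (auto intro!: Inf_greatest)

lemma Dnorm_le: "c > 0 \<Longrightarrow> E1 M E (\<lambda>x. u x / c) \<le> 1 \<Longrightarrow> Dnorm M E u \<le> ereal c"
  unfolding Dnorm_def by (auto intro!: Inf_lower)

lemma Dnorm_empty: "\<not> (\<exists>c>0. E1 M E (\<lambda>x. u x / c) \<le> 1) \<Longrightarrow> Dnorm M E u = \<infinity>"
proof -
  assume "\<not> (\<exists>c>0. E1 M E (\<lambda>x. u x / c) \<le> 1)"
  then have e: "{ereal c | c. c > 0 \<and> E1 M E (\<lambda>x. u x / c) \<le> 1} = {}" by auto
  show ?thesis unfolding Dnorm_def e by (simp add: top_ereal_def)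
qed

lemma in_Dspace: "u \<in> L2 M \<Longrightarrow> c > 0 \<Longrightarrow> E1 M E (\<lambda>x. u x / c) \<le> 1 \<Longrightarrow> u \<in> dirichlet_space M E"
proof -
  assume u: "u \<in> L2 M" and c: "c > 0" and e: "E1 M E (\<lambda>x. u x / c) \<le> 1"
  have eq: "(\<lambda>x. (1/c) * u x) = (\<lambda>x. u x / c)" by auto
  have "E1 M E (\<lambda>x. (1/c) * u x) < \<infinity>" unfolding eq
    using le_less_trans[OF e ennreal_one_less_top] by (simp add: infinity_ennreal_def)
  then show ?thesis unfolding dirichlet_space_def using u c by (auto intro!: exI[of _ "1/c"])
qed

lemma Cap_le: "u \<in> L2 M \<Longrightarrow> open U \<Longrightarrow> A \<subseteq> U \<Longrightarrow> (AE x in M. x \<in> U \<longrightarrow> 1 \<le> u x)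
   \<Longrightarrow> Cap M E A \<le> Dnorm M E u"
  unfolding Cap_def by (rule Inf_lower) blast

lemma Cap_mono: "A \<subseteq> B \<Longrightarrow> Cap M E A \<le> Cap M E B"
  unfolding Cap_def by (rule Inf_superset_mono) blast

lemma Dspace_finite:
  assumes dform: "dirichlet_form M E" and even: "even_form M E"
    and f: "f \<in> dirichlet_space M E"
  shows "\<exists>c>0. E1 M E (\<lambda>x. f x / c) \<le> 1"
proof -
  obtain c0 where c0: "c0 > 0" "E1 M E (\<lambda>x. c0 * f x) < \<infinity>" and fL: "f \<in> L2 M"
    using f unfolding dirichlet_space_def by auto
  define v where "v = (\<lambda>x. c0 * f x)"
  have vL: "v \<in> L2 M" unfolding v_def using L2_scale[OF fL] .
  have zL: "(\<lambda>x. 0::real) \<in> L2 M" unfolding L2_def by simp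
  have Ev: "E v \<noteq> \<infinity>" using c0(2) unfolding E1_def v_def
    by (metis ennreal_add_eq_top infinity_ennreal_def less_irrefl)
  define A where "A = enn2real (E v)"
  define K where "K = (L2norm M v)\<^sup>2"
  have EA: "E v = ennreal A" unfolding A_def using Ev by (simp add: less_top[symmetric] ennreal_enn2real)
  have A0: "A \<ge> 0" unfolding A_def by simp
  have K0: "K \<ge> 0" unfolding K_def by simp
  define s where "s = 1 / (2 * (A + K + 1))"
  have s0: "s > 0" unfolding s_def using A0 K0 by simp
  have s1: "s \<le> 1" unfolding s_def using A0 K0 by (simp add: field_simps)
  have sAK: "s * (A + K) \<le> 1/2" unfolding s_def using A0 K0 by (simp add: field_simps)
  have cv: "\<forall>u\<in>L2 M. \<forall>v\<in>L2 M. \<forall>t::real. 0 \<le> t \<and> t \<le> 1 \<longrightarrow>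
        E (\<lambda>x. t * u x + (1 - t) * v x) \<le> ennreal t * E u + ennreal (1 - t) * E v"
    using dform unfolding dirichlet_form_def by blast
  have conv: "E (\<lambda>x. s * v x + (1 - s) * 0) \<le> ennreal s * E v + ennreal (1 - s) * E (\<lambda>x. 0)"
    using cv[rule_format, OF vL zL, of s] s0 s1 by simp
  have E0: "E (\<lambda>x. 0) = 0" using even unfolding even_form_def by simp
  define c where "c = 1 / (s * c0)"
  have c: "c > 0" unfolding c_def using s0 c0 by simp
  have feq: "(\<lambda>x. f x / c) = (\<lambda>x. s * v x + (1 - s) * 0)"
    unfolding c_def v_def using s0 c0 by (auto simp: field_simps)
  have feq2: "(\<lambda>x. f x / c) = (\<lambda>x. s * v x)"
    unfolding c_def v_def using s0 c0 by (auto simp: field_simps)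
  have Eb: "E (\<lambda>x. f x / c) \<le> ennreal (s * A)"
    using conv s0 A0 unfolding feq[symmetric] E0 EA by (simp add: ennreal_mult)
  have L2sq: "(L2norm M (\<lambda>x. f x / c))\<^sup>2 = s\<^sup>2 * K"
    unfolding feq2 L2norm_scale K_def using s0 by (simp add: power_mult_distrib)
  have "E1 M E (\<lambda>x. f x / c) = ennreal (s\<^sup>2 * K) + E (\<lambda>x. f x / c)"
    unfolding E1_def L2sq ..
  also have "\<dots> \<le> ennreal (s\<^sup>2 * K) + ennreal (s * A)"
    by (rule add_left_mono) (rule Eb)
  also have "\<dots> = ennreal (s\<^sup>2 * K + s * A)" using s0 A0 K0 by (simp add: ennreal_plus)
  also have "\<dots> \<le> 1"
  proof -
    have ss: "s\<^sup>2 \<le> s" using s0 s1 by (metis mult_left_le_one_le less_imp_le power2_eq_square)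
    have "s\<^sup>2 * K \<le> s * K" using mult_right_mono[OF ss K0] .
    moreover have "s * (A + K) = s * A + s * K" by (simp add: distrib_left)
    ultimately have "s\<^sup>2 * K + s * A \<le> 1" using sAK by linarith
    then show ?thesis by (metis ennreal_1 ennreal_leI)
  qed
  finally have "E1 M E (\<lambda>x. f x / c) \<le> 1" .
  then show ?thesis using c by blast
qed

theorem mainTheorem3:
  fixes M :: "'a::t2_space measure" and E :: "('a \<Rightarrow> real) \<Rightarrow> ennreal" and C :: real
  assumes borel: "sets M = sets borel"
    and full_support: "\<And>U. open U \<Longrightarrow> U \<noteq> {} \<Longrightarrow> emeasure M U \<noteq> 0"
    and dform: "dirichlet_form M E"
    and even: "even_form M E"
    and qc: "\<And>f. f \<in> dirichlet_space M E \<Longrightarrow> L2_quasi_continuous M E f"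
    and Cpos: "C > 0"
  shows "((\<forall>f\<in>dirichlet_space M E.
             (\<exists>g. continuous_on UNIV g \<and> bounded (range g) \<and> (AE x in M. f x = g x)))
          \<and> (\<forall>f\<in>dirichlet_space M E. Linfnorm M f \<le> ereal C * Dnorm M E f))
         \<longleftrightarrow> (\<forall>x. Cap M E {x} \<ge> ereal (1 / C))"
proof -
  have spM: "space M = UNIV" using sets_eq_imp_space_eq[OF borel] by simp
  have opensets: "U \<in> sets M" if "open U" for U using borel that by simp
  have evenE: "E (\<lambda>x. - u x) = E u" if "u \<in> L2 M" for u using even that unfolding even_form_def by blast
  show ?thesis
  proof
    assume H: "(\<forall>f\<in>dirichlet_space M E.
             (\<exists>g. continuous_on UNIV g \<and> bounded (range g) \<and> (AE x in M. f x = g x)))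
          \<and> (\<forall>f\<in>dirichlet_space M E. Linfnorm M f \<le> ereal C * Dnorm M E f)"
    show "\<forall>x. Cap M E {x} \<ge> ereal (1 / C)"
    proof
      fix x
      show "ereal (1 / C) \<le> Cap M E {x}" unfolding Cap_def
      proof (rule Inf_greatest)
        fix z assume "z \<in> {Dnorm M E u | u. u \<in> L2 M \<and>
          (\<exists>U. open U \<and> {x} \<subseteq> U \<and> (AE x in M. x \<in> U \<longrightarrow> 1 \<le> u x))}"
        then obtain u U where u: "u \<in> L2 M" "open U" "{x} \<subseteq> U" "AE y in M. y \<in> U \<longrightarrow> 1 \<le> u y"
          and z: "z = Dnorm M E u" by blast
        show "ereal (1 / C) \<le> z"
        proof (cases "\<exists>c>0. E1 M E (\<lambda>y. u y / c) \<le> 1")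
          case False then show ?thesis using Dnorm_empty[OF False] z by simp
        next
          case True
          then obtain c where "c > 0" "E1 M E (\<lambda>y. u y / c) \<le> 1" by blast
          then have uD: "u \<in> dirichlet_space M E" using in_Dspace u(1) by blast
          have le: "Linfnorm M u \<le> ereal C * Dnorm M E u" using H uD by blast
          have ge: "1 \<le> Linfnorm M u"
          proof (rule ccontr)
            assume "\<not> 1 \<le> Linfnorm M u"
            then have lt: "Linfnorm M u < 1" by simp
            have "AE y in M. ereal \<bar>u y\<bar> \<le> Linfnorm M u" unfolding Linfnorm_def by (rule esssup_AE)
            then have "AE y in M. y \<notin> U" using u(4)
            proof eventually_elim
              case (elim y)
              then have "ereal \<bar>u y\<bar> < 1" using lt by order
              then have "\<bar>u y\<bar> < 1" by simp
              then show ?case using elim(2) by auto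
            qed
            then have "emeasure M U = 0" using AE_iff_measurable[of U M "\<lambda>y. y \<notin> U"] opensets[OF u(2)] spM by auto
            moreover have "U \<noteq> {}" using u(3) by auto
            ultimately show False using full_support u(2) by auto
          qed
          from ge le have one: "1 \<le> ereal C * Dnorm M E u" by order
          have "0 \<le> Dnorm M E u" by (rule Dnorm_nonneg)
          then show ?thesis
          proof (cases "Dnorm M E u")
            case (real d)
            then have "1 \<le> C * d" using one by simp
            then have "1 / C \<le> d" using Cpos by (simp add: field_simps)
            then show ?thesis using real z by simp
          qed (use z in auto)
        qed
      qed
    qed
  next
    assume H: "\<forall>x. Cap M E {x} \<ge> ereal (1 / C)"
    have key: "\<exists>g. continuous_on UNIV g \<and> (AE x in M. f x = g x) \<and>
        (\<forall>x c. c > 0 \<and> E1 M E (\<lambda>y. f y / c) \<le> 1 \<longrightarrow> \<bar>g x\<bar> \<le> C * c)"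
      if fD: "f \<in> dirichlet_space M E" for f
    proof -
      have fL: "f \<in> L2 M" using fD unfolding dirichlet_space_def by auto
      obtain g where qg: "quasi_continuous M E g" and ae: "AE x in M. f x = g x"
        using qc[OF fD] unfolding L2_quasi_continuous_def by blast
      have "1 / (2 * C) > 0" using Cpos by simp
      then obtain V where V: "open V" "Cap M E V \<le> ereal (1 / (2 * C))" "continuous_on (- V) g"
        using qg unfolding quasi_continuous_def by blast
      have "V = {}"
      proof (rule ccontr)
        assume "V \<noteq> {}"
        then obtain x where "x \<in> V" by blast
        then have "Cap M E {x} \<le> Cap M E V" by (intro Cap_mono) auto
        with V(2) H have "ereal (1 / C) \<le> ereal (1 / (2 * C))" by (meson order_trans)
        then show False using Cpos by (simp add: field_simps)
      qed
      then have gc: "continuous_on UNIV g" using V(3) by simp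
      have bnd: "\<bar>g x\<bar> \<le> C * c" if c: "c > 0" "E1 M E (\<lambda>y. f y / c) \<le> 1" for x c
      proof (rule ccontr)
        assume "\<not> \<bar>g x\<bar> \<le> C * c"
        then have gx: "C * c < \<bar>g x\<bar>" by simp
        define t where "t = (C * c + \<bar>g x\<bar>) / 2"
        have t1: "C * c < t" "t < \<bar>g x\<bar>" unfolding t_def using gx by auto
        have Cc: "C * c > 0" using Cpos c by simp
        have t0: "t > 0" using t1 Cc by simp
        define \<tau> where "\<tau> = (if g x > 0 then t else - t)"
        have tau0: "\<tau> \<noteq> 0" unfolding \<tau>_def using t0 by auto
        define u where "u = (\<lambda>y. f y / \<tau>)"
        have uL: "u \<in> L2 M" unfolding u_def by (rule L2_div[OF fL])
        define U where "U = {y. (\<lambda>y. 1) y < (\<lambda>y. g y / \<tau>) y}"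
        have "continuous_on UNIV (\<lambda>y. g y / \<tau>)" using gc tau0 by (intro continuous_intros) auto
        then have Uo: "open U" unfolding U_def by (intro open_Collect_less) auto
        have xU: "x \<in> U"
        proof -
          have "g x / \<tau> = \<bar>g x\<bar> / t" unfolding \<tau>_def using t0 by auto
          also have "\<dots> > 1" using t1 t0 by simp
          finally show ?thesis unfolding U_def by simp
        qed
        have aeU: "AE y in M. y \<in> U \<longrightarrow> 1 \<le> u y"
          using ae by eventually_elim (auto simp: U_def u_def)
        have ct: "c / t > 0" using c t0 by simp
        have fun_eq: "(\<lambda>y. u y / (c / t)) = (\<lambda>y. f y / c) \<or> (\<lambda>y. u y / (c / t)) = (\<lambda>y. - (f y / c))"
          unfolding u_def \<tau>_def using t0 c by (auto simp: field_simps)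
        have fcL: "(\<lambda>y. f y / c) \<in> L2 M" by (rule L2_div[OF fL])
        have "E1 M E (\<lambda>y. - (f y / c)) = E1 M E (\<lambda>y. f y / c)"
          unfolding E1_def using L2norm_neg[of M "\<lambda>y. f y / c"] evenE[OF fcL] by simp
        then have "E1 M E (\<lambda>y. u y / (c / t)) \<le> 1" using fun_eq c(2) by auto
        then have "Dnorm M E u \<le> ereal (c / t)" using Dnorm_le[OF ct] by blast
        moreover have "Cap M E {x} \<le> Dnorm M E u" using Cap_le[OF uL Uo _ aeU] xU by blast
        ultimately have "ereal (1 / C) \<le> ereal (c / t)" using H by (meson order_trans)
        then have "1 / C \<le> c / t" by simp
        then have "t \<le> C * c" using Cpos t0 by (simp add: field_simps)
        then show False using t1 by simp
      qed
      show ?thesis using gc ae bnd by blast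
    qed
    show "(\<forall>f\<in>dirichlet_space M E.
             (\<exists>g. continuous_on UNIV g \<and> bounded (range g) \<and> (AE x in M. f x = g x)))
          \<and> (\<forall>f\<in>dirichlet_space M E. Linfnorm M f \<le> ereal C * Dnorm M E f)"
    proof (intro conjI ballI)
      fix f assume fD: "f \<in> dirichlet_space M E"
      obtain g where g: "continuous_on UNIV g" "AE x in M. f x = g x"
        "\<And>x c. c > 0 \<Longrightarrow> E1 M E (\<lambda>y. f y / c) \<le> 1 \<Longrightarrow> \<bar>g x\<bar> \<le> C * c"
        using key[OF fD] by blast
      obtain c where c: "c > 0" "E1 M E (\<lambda>y. f y / c) \<le> 1" using Dspace_finite[OF dform even fD] by blast
      have "bounded (range g)" unfolding bounded_real using g(3)[OF c] by blast
      then show "\<exists>g. continuous_on UNIV g \<and> bounded (range g) \<and> (AE x in M. f x = g x)"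
        using g by blast
    next
      fix f assume fD: "f \<in> dirichlet_space M E"
      have fL: "f \<in> L2 M" using fD unfolding dirichlet_space_def by auto
      then have fm: "f \<in> borel_measurable M" unfolding L2_def by auto
      obtain g where g: "continuous_on UNIV g" "AE x in M. f x = g x"
        "\<And>x c. c > 0 \<Longrightarrow> E1 M E (\<lambda>y. f y / c) \<le> 1 \<Longrightarrow> \<bar>g x\<bar> \<le> C * c"
        using key[OF fD] by blast
      have "ereal (1 / C) * Linfnorm M f \<le> Dnorm M E f" unfolding Dnorm_def
      proof (rule Inf_greatest)
        fix z assume "z \<in> {ereal c | c. c > 0 \<and> E1 M E (\<lambda>x. f x / c) \<le> 1}"
        then obtain c where c: "c > 0" "E1 M E (\<lambda>x. f x / c) \<le> 1" and z: "z = ereal c" by blast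
        have "Linfnorm M f \<le> ereal (C * c)" unfolding Linfnorm_def
        proof (rule esssup_I)
          show "(\<lambda>x. ereal \<bar>f x\<bar>) \<in> borel_measurable M" using fm by measurable
          show "AE x in M. ereal \<bar>f x\<bar> \<le> ereal (C * c)"
            using g(2) by eventually_elim (use g(3)[OF c] in auto)
        qed
        then have "ereal (1 / C) * Linfnorm M f \<le> ereal (1 / C) * ereal (C * c)"
          by (rule ereal_mult_left_mono) (use Cpos in simp)
        also have "\<dots> = z" using Cpos z by simp
        finally show "ereal (1 / C) * Linfnorm M f \<le> z" .
      qed
      then have "ereal C * (ereal (1 / C) * Linfnorm M f) \<le> ereal C * Dnorm M E f"
        by (rule ereal_mult_left_mono) (use Cpos in simp)
      moreover have "ereal C * (ereal (1 / C) * Linfnorm M f) = Linfnorm M f"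
        using Cpos by (simp add: mult.assoc[symmetric])
      ultimately show "Linfnorm M f \<le> ereal C * Dnorm M E f" by simp
    qed
  qed
qed

end
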